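(* Let $n$ be a positive integer (large enough that the partitions below are partitions of $n$). Then: (1) $\langle\psi_{(n)},s_{(1^n)}\rangle=\langle\psi_{(n-2,2)},s_{(1^n)}\rangle$ equals the number of self-conjugate partitions of $n$; (2) $\langle\psi_{(n-1,1)},s_{(1^n)}\rangle=\langle\psi_{(n)},s_{(1^n)}\rangle+(-1)^n$; (3) $\langle\psi_{(n-2,1^2)},s_{(1^n)}\rangle=\langle\psi_{(n)},s_{(1^n)}\rangle-(-1)^n$; (4) $\langle\psi_{(n-3,3)},s_{(1^n)}\rangle=\langle\psi_{(n)},s_{(1^n)}\rangle$; (5) $\langle\psi_{(2^k,1^{n-2k})},s_{(1^n)}\rangle=(-1)^k+\langle\psi_{(2^{k-1},1^{n-2k+2})},s_{(1^n)}\rangle$ for $1\le k\le\lfloor n/2\rfloor$; (6) $\langle\psi_{(3,1^{n-3})},s_{(1^n)}\rangle=1+\langle\psi_{(2^k,1^{n-2k})},s_{(1^n)}\rangle$ where $k=\lfloor n/2\rfloor$.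
   Context: $p_\lambda=\prod_ip_{\lambda_i}$ denotes power sums. Reverse lexicographic order on partitions of $n$: for distinct $\lambda,\mu\vdash n$, $\lambda>\mu$ iff $\lambda_j>\mu_j$ at the first index $j$ where they differ; $(1^n)$ is the minimum and $(n)$ the maximum. For $\mu\vdash n$, $\psi_\mu=\sum_{\lambda\vdash n,\ (1^n)\le\lambda\le\mu}p_\lambda$. $\langle\cdot,\cdot\rangle$ is the Hall inner product, for which the Schur functions form an orthonormal basis. *)

theory Defs
  imports Complex_Main
begin

definition is_partition :: "nat list \<Rightarrow> bool" where
  "is_partition lam \<longleftrightarrow> sorted_wrt (\<ge>) lam \<and> (\<forall>x\<in>set lam. 0 < x)"

definition partitions :: "nat \<Rightarrow> nat list set" where
  "partitions n = {lam. is_partition lam \<and> sum_list lam = n}"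

definition part :: "nat list \<Rightarrow> nat \<Rightarrow> nat" where
  "part lam j = (if j < length lam then lam ! j else 0)"

definition revlex_less :: "nat list \<Rightarrow> nat list \<Rightarrow> bool" where
  "revlex_less lam mu \<longleftrightarrow>
     (\<exists>j. (\<forall>i<j. part lam i = part mu i) \<and> part lam j < part mu j)"

definition revlex_le :: "nat list \<Rightarrow> nat list \<Rightarrow> bool" where
  "revlex_le lam mu \<longleftrightarrow> lam = mu \<or> revlex_less lam mu"

definition conj_part :: "nat list \<Rightarrow> nat list" where
  "conj_part lam = map (\<lambda>i. length (filter (\<lambda>x. i < x) lam)) [0..<foldr max lam 0]"

text \<open>The power sums p_lam (lam ranging over partitions) form a basis of the
  ring of symmetric functions over Q; a symmetric function is represented by
  its (finitely supported) coefficient function in this basis.\<close>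
type_synonym symfun = "nat list \<Rightarrow> rat"

definition p :: "nat list \<Rightarrow> symfun" where
  "p lam = (\<lambda>nu. if nu = lam then 1 else 0)"

definition zee :: "nat list \<Rightarrow> rat" where
  "zee lam = (\<Prod>i\<in>set lam. of_nat (i ^ count_list lam i * fact (count_list lam i)))"

text \<open>Hall inner product: <p_lam, p_mu> = z_lam delta_{lam mu}
  (extended bilinearly; f is assumed finitely supported).\<close>
definition hall :: "symfun \<Rightarrow> symfun \<Rightarrow> rat" where
  "hall f g = (\<Sum>lam\<in>{lam. is_partition lam \<and> f lam \<noteq> 0}. zee lam * f lam * g lam)"

text \<open>Elementary symmetric function e_n = s_(1^n), in the power-sum basis:
  e_n = sum over lam |- n of eps_lam z_lam^-1 p_lam, eps_lam = (-1)^(n - l(lam))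
  (Macdonald, I.(2.14')).\<close>
definition schur_col :: "nat \<Rightarrow> symfun" where
  "schur_col n = (\<lambda>nu. \<Sum>lam\<in>partitions n.
      ((-1) ^ (n - length lam) / zee lam) * p lam nu)"

definition psi :: "nat list \<Rightarrow> symfun" where
  "psi mu = (\<lambda>nu. \<Sum>lam\<in>{lam\<in>partitions (sum_list mu). revlex_le lam mu}. p lam nu)"

end

theory Submission
  imports Defs "HOL-Computational_Algebra.Formal_Power_Series"
begin


lemma is_partition_Nil[simp]: "is_partition []"
  by (simp add: is_partition_def)

lemma is_partition_Cons[simp]:
  "is_partition (a # l) \<longleftrightarrow> 0 < a \<and> (\<forall>x\<in>set l. x \<le> a) \<and> is_partition l"
  by (auto simp: is_partition_def)

lemma part_Nil[simp]: "part [] i = 0"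
  by (simp add: Defs.part_def)

lemma part_Cons_0[simp]: "part (a # l) 0 = a"
  by (simp add: Defs.part_def)

lemma part_Cons_Suc[simp]: "part (a # l) (Suc i) = part l i"
  by (simp add: Defs.part_def)

lemma part_pos_iff: "is_partition l \<Longrightarrow> 0 < part l i \<longleftrightarrow> i < length l"
  by (auto simp: Defs.part_def is_partition_def)

lemma part_mono: "is_partition l \<Longrightarrow> i \<le> j \<Longrightarrow> part l j \<le> part l i"
proof (induct l arbitrary: i j)
  case Nil then show ?case by simp
next
  case (Cons a l)
  show ?case
  proof (cases j)
    case 0 then show ?thesis using Cons by simp
  next
    case (Suc j')
    show ?thesis
    proof (cases i)
      case 0
      then show ?thesis using Cons Suc by (auto simp: Defs.part_def)
    next
      case (Suc i') then show ?thesis using Cons \<open>j = Suc j'\<close> by simp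
    qed
  qed
qed

lemma part_le_0: "is_partition l \<Longrightarrow> part l i \<le> part l 0"
  using part_mono by blast

lemma set_le_part0: "is_partition l \<Longrightarrow> x \<in> set l \<Longrightarrow> x \<le> part l 0"
  by (cases l) auto

lemma part_eq_imp_eq:
  assumes "is_partition l" "is_partition m" "part l = part m"
  shows "l = m"
proof -
  have len: "length l = length m"
  proof -
    have "\<And>i. i < length l \<longleftrightarrow> i < length m"
      using part_pos_iff[OF assms(1)] part_pos_iff[OF assms(2)] assms(3) by metis
    then show ?thesis by (metis less_irrefl linorder_neqE_nat)
  qed
  show ?thesis
  proof (rule nth_equalityI[OF len])
    fix i assume "i < length l"
    then show "l ! i = m ! i" using len fun_cong[OF assms(3), of i] by (simp add: Defs.part_def)
  qed
qed

lemma sum_list_part: "length l \<le> K \<Longrightarrow> sum_list l = (\<Sum>i<K. part l i)"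
proof (induct l arbitrary: K)
  case Nil then show ?case by simp
next
  case (Cons a l)
  then obtain K' where K: "K = Suc K'" by (cases K) auto
  have "(\<Sum>i<K. part (a#l) i) = a + (\<Sum>i<K'. part l i)"
    unfolding K sum.lessThan_Suc_shift by simp
  then show ?case using Cons K by simp
qed

lemma length_le_sum: "is_partition l \<Longrightarrow> length l \<le> sum_list l"
  by (induct l) auto

lemma finite_partitions: "finite (partitions n)"
proof -
  have "partitions n \<subseteq> {xs. set xs \<subseteq> {0..n} \<and> length xs \<le> n}"
    by (auto simp: partitions_def length_le_sum member_le_sum_list)
  then show ?thesis using finite_lists_length_le[of "{0..n}" n] finite_subset by blast
qed


lemma zee_nonzero: "is_partition l \<Longrightarrow> zee l \<noteq> 0"
  unfolding zee_def is_partition_def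
  by (subst prod_zero_iff) auto

lemma psi_eq: "psi mu = (\<lambda>nu. if nu \<in> {lam\<in>partitions (sum_list mu). revlex_le lam mu} then 1 else 0)"
proof -
  have fin: "finite {lam\<in>partitions (sum_list mu). revlex_le lam mu}"
    using finite_partitions by auto
  show ?thesis unfolding psi_def p_def
  proof (rule ext)
    fix nu
    have "(\<Sum>lam\<in>{lam\<in>partitions (sum_list mu). revlex_le lam mu}. if nu = lam then 1 else 0)
      = (if nu \<in> {lam\<in>partitions (sum_list mu). revlex_le lam mu} then 1 else (0::rat))"
      using sum.delta'[OF fin, of nu "\<lambda>_. 1::rat"] by (simp add: eq_commute)
    then show "(\<Sum>lam\<in>{lam\<in>partitions (sum_list mu). revlex_le lam mu}. if nu = lam then 1 else 0)
      = (if nu \<in> {lam\<in>partitions (sum_list mu). revlex_le lam mu} then 1 else (0::rat))" .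
  qed
qed

lemma schur_col_eq: "schur_col n = (\<lambda>nu. if nu \<in> partitions n then (-1) ^ (n - length nu) / zee nu else 0)"
proof (rule ext)
  fix nu
  have "(\<Sum>lam\<in>partitions n. ((-1) ^ (n - length lam) / zee lam) * p lam nu)
     = (\<Sum>lam\<in>partitions n. if nu = lam then (-1) ^ (n - length lam) / zee lam else 0)"
    by (rule sum.cong) (auto simp: p_def)
  also have "\<dots> = (if nu \<in> partitions n then (-1) ^ (n - length nu) / zee nu else 0)"
    by (rule sum.delta'[OF finite_partitions])
  finally show "schur_col n nu = (if nu \<in> partitions n then (-1) ^ (n - length nu) / zee nu else 0)"
    unfolding schur_col_def .
qed

lemma hall_psi:
  assumes "sum_list mu = n"
  shows "hall (psi mu) (schur_col n) = (\<Sum>lam\<in>{lam\<in>partitions n. revlex_le lam mu}. (-1) ^ (n - length lam))"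
proof -
  let ?L = "{lam\<in>partitions n. revlex_le lam mu}"
  have 1: "{lam. is_partition lam \<and> psi mu lam \<noteq> 0} = ?L"
    unfolding psi_eq assms by (auto simp: partitions_def)
  show ?thesis unfolding hall_def 1
    by (rule sum.cong) (auto simp: psi_eq schur_col_eq assms zee_nonzero partitions_def)
qed


lemma revlex_less_Cons:
  "revlex_less (a # l) (b # m) \<longleftrightarrow> a < b \<or> (a = b \<and> revlex_less l m)"
proof
  assume "revlex_less (a # l) (b # m)"
  then obtain j where j: "\<forall>i<j. part (a#l) i = part (b#m) i" "part (a#l) j < part (b#m) j"
    unfolding revlex_less_def by blast
  show "a < b \<or> (a = b \<and> revlex_less l m)"
  proof (cases j)
    case 0 then show ?thesis using j by simp
  next
    case (Suc j')
    have "a = b" using j(1)[rule_format, of 0] Suc by simp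
    moreover have "\<forall>i<j'. part l i = part m i" using j(1) Suc by auto
    moreover have "part l j' < part m j'" using j(2) Suc by simp
    ultimately show ?thesis unfolding revlex_less_def by blast
  qed
next
  assume "a < b \<or> (a = b \<and> revlex_less l m)"
  then show "revlex_less (a # l) (b # m)"
  proof
    assume "a < b" then show ?thesis unfolding revlex_less_def
      by (intro exI[of _ 0]) simp
  next
    assume "a = b \<and> revlex_less l m"
    then obtain j where j: "a = b" "\<forall>i<j. part l i = part m i" "part l j < part m j"
      unfolding revlex_less_def by blast
    have "\<forall>i<Suc j. part (a#l) i = part (b#m) i"
      using j by (auto simp: less_Suc_eq_0_disj)
    then show ?thesis unfolding revlex_less_def using j(3)
      by (intro exI[of _ "Suc j"]) simp
  qed
qed

lemma revlex_le_Cons: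
  "revlex_le (a # l) (b # m) \<longleftrightarrow> a < b \<or> (a = b \<and> revlex_le l m)"
  unfolding revlex_le_def revlex_less_Cons by auto

lemma revlex_less_part0: "part l 0 < part m 0 \<Longrightarrow> revlex_less l m"
  unfolding revlex_less_def by (intro exI[of _ 0]) simp

lemma revlex_less_part0_le: "revlex_less l m \<Longrightarrow> part l 0 \<le> part m 0"
  unfolding revlex_less_def by (metis le_eq_less_or_eq neq0_conv)

lemma revlex_le_part0: "revlex_le l m \<Longrightarrow> part l 0 \<le> part m 0"
  unfolding revlex_le_def using revlex_less_part0_le by auto

lemma revlex_less_asym: "revlex_less l m \<Longrightarrow> \<not> revlex_less m l"
proof
  assume a: "revlex_less l m" "revlex_less m l"
  obtain j where j: "\<forall>i<j. part l i = part m i" "part l j < part m j"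
    using a(1) unfolding revlex_less_def by blast
  obtain k where k: "\<forall>i<k. part m i = part l i" "part m k < part l k"
    using a(2) unfolding revlex_less_def by blast
  show False
  proof (cases j k rule: linorder_cases)
    case less then show ?thesis using j k by (metis less_not_sym)
  next
    case equal then show ?thesis using j k by simp
  next
    case greater then show ?thesis using j k by (metis less_not_sym)
  qed
qed

lemma revlex_less_irrefl: "\<not> revlex_less l l"
  using revlex_less_asym by blast

lemma Nil_in_partitions[simp]: "[] \<in> partitions n \<longleftrightarrow> n = 0"
  by (auto simp: partitions_def)

lemma Cons_in_partitions[simp]:
  "a # l \<in> partitions n \<longleftrightarrow> 0 < a \<and> a \<le> n \<and> (\<forall>x\<in>set l. x \<le> a) \<and> l \<in> partitions (n - a)"
  by (auto simp: partitions_def)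

lemma partitions_0: "partitions 0 = {[]}"
proof -
  have "l \<in> partitions 0 \<Longrightarrow> l = []" for l by (cases l) auto
  then show ?thesis by auto
qed

lemma partitions_1: "partitions 1 = {[1]}"
proof -
  have "l \<in> partitions 1 \<Longrightarrow> l = [1]" for l by (cases l) (auto simp: partitions_0)
  then show ?thesis by (auto simp: partitions_0)
qed

lemma partitions_2: "partitions 2 = {[2], [1,1]}"
proof -
  have "l \<in> partitions 2 \<Longrightarrow> l = [2] \<or> l = [1,1]" for l
  proof (cases l)
    case (Cons a l')
    assume "l \<in> partitions 2"
    then have "a = 1 \<or> a = 2" using Cons by auto
    then show ?thesis using Cons \<open>l \<in> partitions 2\<close> by (auto simp: partitions_0 partitions_1 partitions_1[simplified])
  qed simp
  then show ?thesis by (auto simp: partitions_0 partitions_1 partitions_1[simplified])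
qed


definition Le :: "nat \<Rightarrow> nat list \<Rightarrow> nat list set" where
  "Le n mu = {lam\<in>partitions n. revlex_le lam mu}"
definition eps :: "nat \<Rightarrow> nat list \<Rightarrow> rat" where
  "eps n lam = (-1) ^ (n - length lam)"
definition V :: "nat \<Rightarrow> nat list \<Rightarrow> rat" where
  "V n mu = (\<Sum>lam\<in>Le n mu. eps n lam)"
definition Lt :: "nat \<Rightarrow> nat \<Rightarrow> nat list set" where
  "Lt n a = {lam\<in>partitions n. part lam 0 < a}"
definition G :: "nat \<Rightarrow> nat \<Rightarrow> nat list set" where
  "G n a = Cons a ` {r\<in>partitions (n-a). \<forall>x\<in>set r. x \<le> a}"

lemma hall_V: "sum_list mu = n \<Longrightarrow> hall (psi mu) (schur_col n) = V n mu"
  unfolding V_def Le_def eps_def by (rule hall_psi)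

lemma finite_Lt[simp]: "finite (Lt n a)"
  unfolding Lt_def using finite_partitions by auto

lemma finite_G[simp]: "finite (G n a)"
  unfolding G_def using finite_partitions by auto

lemma Le_Cons:
  assumes "0 < a" "a \<le> n"
  shows "Le n (a # m) = Lt n a \<union> Cons a ` {r\<in>partitions (n-a). (\<forall>x\<in>set r. x \<le> a) \<and> revlex_le r m}"
proof (rule set_eqI, rule iffI)
  fix lam assume "lam \<in> Le n (a # m)"
  then have l: "lam \<in> partitions n" "revlex_le lam (a # m)" by (auto simp: Le_def)
  then obtain b r where lam: "lam = b # r" using assms by (cases lam) auto
  have c: "b < a \<or> (b = a \<and> revlex_le r m)" using l(2) unfolding lam revlex_le_Cons .
  show "lam \<in> Lt n a \<union> Cons a ` {r\<in>partitions (n-a). (\<forall>x\<in>set r. x \<le> a) \<and> revlex_le r m}"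
  proof (cases "b < a")
    case True
    then show ?thesis using l(1) lam unfolding Lt_def by simp
  next
    case False
    then have "b = a" "revlex_le r m" using c by auto
    then show ?thesis using l(1) lam by (intro UnI2 imageI) simp
  qed
next
  fix lam assume "lam \<in> Lt n a \<union> Cons a ` {r\<in>partitions (n-a). (\<forall>x\<in>set r. x \<le> a) \<and> revlex_le r m}"
  then show "lam \<in> Le n (a # m)"
  proof
    assume "lam \<in> Lt n a"
    then show ?thesis unfolding Lt_def Le_def revlex_le_def
      using revlex_less_part0[of lam "a # m"] by auto
  next
    assume "lam \<in> Cons a ` {r\<in>partitions (n-a). (\<forall>x\<in>set r. x \<le> a) \<and> revlex_le r m}"
    then obtain r where "lam = a # r" "r \<in> partitions (n-a)" "\<forall>x\<in>set r. x \<le> a" "revlex_le r m"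
      by blast
    then show ?thesis using assms unfolding Le_def by (simp add: revlex_le_Cons)
  qed
qed

lemma le_single:
  assumes "r \<in> partitions k" "0 < k" shows "revlex_le r [k]"
proof (cases r)
  case Nil then show ?thesis using assms by simp
next
  case (Cons b r')
  then show ?thesis using assms
  proof (cases "b = k")
    case True
    then have "r' = []" using Cons assms by (simp add: partitions_0)
    then show ?thesis using True Cons by (simp add: revlex_le_def)
  next
    case False
    then have "b < k" using Cons assms by simp
    then show ?thesis using Cons by (simp add: revlex_le_Cons)
  qed
qed

lemma Le_two:
  assumes "0 < n - a" "n - a \<le> a" "a \<le> n"
  shows "Le n [a, n - a] = Lt n a \<union> G n a"
proof -
  have "{r\<in>partitions (n-a). (\<forall>x\<in>set r. x \<le> a) \<and> revlex_le r [n-a]}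
     = {r\<in>partitions (n-a). \<forall>x\<in>set r. x \<le> a}"
    using le_single assms by auto
  then show ?thesis using Le_Cons[of a n "[n-a]"] assms by (simp add: G_def)
qed

lemma Le_single:
  assumes "0 < n"
  shows "Le n [n] = Lt n n \<union> G n n"
proof -
  have "{r\<in>partitions (n-n). (\<forall>x\<in>set r. x \<le> n) \<and> revlex_le r []} = {r\<in>partitions (n-n). \<forall>x\<in>set r. x \<le> n}"
    by (auto simp: partitions_0 revlex_le_def)
  then show ?thesis using Le_Cons[of n n "[]"] assms by (simp add: G_def)
qed

lemma Lt_Suc:
  assumes "0 < a" "a \<le> n"
  shows "Lt n (Suc a) = Lt n a \<union> G n a" "Lt n a \<inter> G n a = {}"
proof -
  show "Lt n (Suc a) = Lt n a \<union> G n a"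
  proof (rule set_eqI, rule iffI)
    fix lam assume "lam \<in> Lt n (Suc a)"
    then show "lam \<in> Lt n a \<union> G n a" using assms
    proof (cases lam)
      case (Cons b r)
      show ?thesis
      proof (cases "b = a")
        case True
        then show ?thesis using Cons \<open>lam \<in> Lt n (Suc a)\<close> unfolding Lt_def G_def by auto
      next
        case False
        then show ?thesis using Cons \<open>lam \<in> Lt n (Suc a)\<close> unfolding Lt_def by auto
      qed
    qed (auto simp: Lt_def)
  qed (use assms in \<open>auto simp: Lt_def G_def\<close>)
  show "Lt n a \<inter> G n a = {}" by (auto simp: Lt_def G_def)
qed

lemma sum_G: "(\<Sum>lam\<in>G n a. f lam) = (\<Sum>r\<in>{r\<in>partitions (n-a). \<forall>x\<in>set r. x \<le> a}. f (a # r))"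
  unfolding G_def by (subst sum.reindex) (auto simp: inj_on_def)

lemma G_n: "0 < n \<Longrightarrow> G n n = {[n]}"
proof -
  have "{r\<in>partitions (n-n). \<forall>x\<in>set r. x \<le> n} = {[]}" by (auto simp: partitions_0)
  then show ?thesis unfolding G_def by simp
qed

lemma G_n1:
  assumes "2 \<le> n" shows "G n (n-1) = {[n-1, 1]}"
proof -
  have "n - (n-1) = 1" using assms by simp
  then have "{r\<in>partitions (n-(n-1)). \<forall>x\<in>set r. x \<le> n-1} = {[1]}"
    using assms unfolding \<open>n - (n-1) = 1\<close> partitions_1 by auto
  then show ?thesis unfolding G_def by simp
qed

lemma G_n2:
  assumes "4 \<le> n" shows "G n (n-2) = {[n-2, 2], [n-2, 1, 1]}"
proof -
  have "n - (n-2) = 2" using assms by simp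
  then have "{r\<in>partitions (n-(n-2)). \<forall>x\<in>set r. x \<le> n-2} = {[2], [1,1]}"
    using assms by (simp add: partitions_2) (auto simp: partitions_2)
  then show ?thesis unfolding G_def by simp
qed

lemma Le_n211:
  assumes "4 \<le> n"
  shows "Le n [n-2, 1, 1] = Lt n (n-2) \<union> {[n-2, 1, 1]}"
proof -
  have e: "n - (n-2) = 2" using assms by simp
  have "\<not> revlex_le [2] [1,1]" by (simp add: revlex_le_def revlex_less_Cons)
  moreover have "revlex_le [1,1] [1,1]" by (simp add: revlex_le_def)
  ultimately have "{r\<in>partitions (n-(n-2)). (\<forall>x\<in>set r. x \<le> n-2) \<and> revlex_le r [1,1]} = {[1,1]}"
    using assms unfolding e partitions_2 by auto
  then show ?thesis using Le_Cons[of "n-2" n "[1,1]"] assms by simp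
qed


lemma sum_Lt_Suc:
  assumes "0 < a" "a \<le> n"
  shows "(\<Sum>l\<in>Lt n (Suc a). f l) = (\<Sum>l\<in>Lt n a. f l) + (\<Sum>l\<in>G n a. f l)"
  unfolding Lt_Suc(1)[OF assms] by (rule sum.union_disjoint) (use Lt_Suc(2)[OF assms] in auto)

lemma Lt_all: "Lt n (Suc n) = partitions n"
  unfolding Lt_def by (auto simp: partitions_def le_imp_less_Suc member_le_sum_list Defs.part_def)

lemma part1to4:
  fixes n :: nat
  assumes n: "n \<ge> 6"
  defines "W \<equiv> (\<Sum>l\<in>Lt n (n-2). eps n l)"
  defines "s \<equiv> ((-1::rat) ^ (n-3))"
  shows "V n [n] = W" "V n [n-1,1] = W - s" "V n [n-2,2] = W" "V n [n-2,1,1] = W + s"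
    "V n [n-3,3] = W" "(-1::rat)^n = -s"
proof -
  have e2: "n - 2 = Suc (n-3)" and e1: "n - 1 = Suc (n-2)" and e0: "n = Suc (n-1)" using n by auto
  have s2: "(-1::rat) ^ (n-2) = - s" unfolding s_def by (subst e2) simp
  have s1: "(-1::rat) ^ (n-1) = s" using s2 by (subst e1) simp
  show s0: "(-1::rat) ^ n = - s" using s1 by (subst e0) simp
  have G2: "(\<Sum>l\<in>G n (n-2). eps n l) = 0"
  proof -
    have "[n-2, 2] \<noteq> [n-2, 1, 1]" by simp
    then have "(\<Sum>l\<in>G n (n-2). eps n l) = eps n [n-2,2] + eps n [n-2,1,1]"
      using n by (simp add: G_n2)
    also have "\<dots> = 0"
    proof -
      have "eps n [n-2,2] = -s" using s2 by (simp add: eps_def numeral_2_eq_2)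
      moreover have "eps n [n-2,1,1] = s" by (simp add: eps_def s_def numeral_3_eq_3)
      ultimately show ?thesis by simp
    qed
    finally show ?thesis .
  qed
  have G1: "(\<Sum>l\<in>G n (n-1). eps n l) = - s"
  proof -
    have "G n (n-1) = {[n-1,1]}" using n by (intro G_n1) simp
    then show ?thesis using s2 by (simp add: eps_def numeral_2_eq_2)
  qed
  have G0: "(\<Sum>l\<in>G n n. eps n l) = s"
    using n s1 by (simp add: G_n eps_def)
  have L1: "(\<Sum>l\<in>Lt n (n-1). eps n l) = W"
    using sum_Lt_Suc[of "n-2" n "eps n"] G2 n e1 unfolding W_def by simp
  have L0: "(\<Sum>l\<in>Lt n n. eps n l) = W - s"
    using sum_Lt_Suc[of "n-1" n "eps n"] G1 n e0 L1 by simp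
  have Lall: "(\<Sum>l\<in>Lt n (Suc n). eps n l) = W"
    using sum_Lt_Suc[of "n" n "eps n"] G0 n L0 by simp
  show "V n [n] = W"
    unfolding V_def using Le_single[of n] n Lt_Suc[of n n] Lall by simp
  show "V n [n-1,1] = W - s"
  proof -
    have "Le n [n-1, n - (n-1)] = Lt n (Suc (n-1))"
      using Le_two[of n "n-1"] Lt_Suc[of "n-1" n] n by simp
    moreover have "n - (n-1) = 1" using n by simp
    ultimately show ?thesis unfolding V_def using L0 e0 by simp
  qed
  show "V n [n-2,2] = W"
  proof -
    have "Le n [n-2, n - (n-2)] = Lt n (Suc (n-2))"
      using Le_two[of n "n-2"] Lt_Suc[of "n-2" n] n by simp
    moreover have "n - (n-2) = 2" using n by simp
    ultimately show ?thesis unfolding V_def using L1 e1 by simp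
  qed
  show "V n [n-3,3] = W"
  proof -
    have "Le n [n-3, n - (n-3)] = Lt n (Suc (n-3))"
      using Le_two[of n "n-3"] Lt_Suc[of "n-3" n] n by simp
    moreover have "n - (n-3) = 3" using n by simp
    ultimately show ?thesis unfolding V_def W_def using e2 by simp
  qed
  show "V n [n-2,1,1] = W + s"
  proof -
    have "[n-2,1,1] \<notin> Lt n (n-2)" by (simp add: Lt_def)
    then have "V n [n-2,1,1] = W + eps n [n-2,1,1]"
      unfolding V_def W_def using Le_n211[of n] n by simp
    then show ?thesis unfolding eps_def s_def by (simp add: numeral_3_eq_3)
  qed
qed


definition R :: "nat \<Rightarrow> nat \<Rightarrow> nat list" where
  "R n a = replicate a 2 @ replicate (n - 2*a) 1"

lemma R_length: "2*a \<le> n \<Longrightarrow> length (R n a) = n - a"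
  by (simp add: R_def)

lemma R_part: "2*a \<le> n \<Longrightarrow> part (R n a) i = (if i < a then 2 else if i < n - a then 1 else 0)"
  by (auto simp: Defs.part_def R_def nth_append)

lemma sorted_rep: "sorted_wrt (\<lambda>x y. y \<le> x) (replicate m (c::nat))"
  by (induct m) auto

lemma R_in: "2*a \<le> n \<Longrightarrow> R n a \<in> partitions n"
  by (auto simp: R_def partitions_def is_partition_def sorted_wrt_append sum_list_replicate sorted_rep)

lemma le2_form: "is_partition l \<Longrightarrow> \<forall>x\<in>set l. x \<le> 2 \<Longrightarrow> \<exists>a b. l = replicate a 2 @ replicate b 1"
proof (induct l)
  case Nil then show ?case by (intro exI[of _ 0]) simp
next
  case (Cons x l)
  then obtain a b where ab: "l = replicate a 2 @ replicate b 1" by auto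
  have "x = 1 \<or> x = 2" using Cons.prems by auto
  then show ?case
  proof
    assume "x = 2"
    then show ?thesis using ab by (intro exI[of _ "Suc a"] exI[of _ b]) simp
  next
    assume x: "x = 1"
    then have "a = 0" using Cons.prems ab by (cases a) auto
    then show ?thesis using ab x by (intro exI[of _ 0] exI[of _ "Suc b"]) simp
  qed
qed

lemma le2_R:
  assumes l: "l \<in> partitions n" "part l 0 \<le> 2"
  shows "\<exists>a. 2*a \<le> n \<and> l = R n a"
proof -
  have ip: "is_partition l" and sl: "sum_list l = n" using l(1) by (auto simp: partitions_def)
  have "\<forall>x\<in>set l. x \<le> 2"
  proof
    fix x assume "x \<in> set l"
    then have "x \<le> part l 0" by (rule set_le_part0[OF ip])
    then show "x \<le> 2" using l(2) by simp
  qed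
  then obtain a b where ab: "l = replicate a 2 @ replicate b 1"
    using le2_form ip by blast
  then have "2*a + b = n" using sl by (simp add: sum_list_replicate)
  then have "b = n - 2*a" "2*a \<le> n" by auto
  then show ?thesis using ab unfolding R_def by blast
qed

lemma R_less: "2*k \<le> n \<Longrightarrow> a < k \<Longrightarrow> revlex_less (R n a) (R n k)"
  unfolding revlex_less_def
  by (intro exI[of _ a]) (simp add: R_part)

lemma R_cmp:
  assumes h: "2*a \<le> n" "2*k \<le> n"
  shows "revlex_le (R n a) (R n k) \<longleftrightarrow> a \<le> k"
proof (cases a k rule: linorder_cases)
  case less then show ?thesis using R_less[of k n a] h by (simp add: revlex_le_def) 
next
  case equal then show ?thesis by (simp add: revlex_le_def)
next
  case greater
  have "revlex_less (R n k) (R n a)" using R_less[OF h(1) greater] .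
  moreover have "R n a \<noteq> R n k"
  proof
    assume e: "R n a = R n k"
    have "part (R n a) k = 2" using R_part[OF h(1), of k] greater by simp
    moreover have "part (R n k) k \<noteq> 2" using R_part[OF h(2), of k] by simp
    ultimately show False using e by simp
  qed
  ultimately show ?thesis using revlex_less_asym greater unfolding revlex_le_def by auto
qed

lemma Le_R:
  assumes "2*k \<le> n" "0 < n"
  shows "Le n (R n k) = R n ` {..k}"
proof (rule set_eqI, rule iffI)
  fix l assume "l \<in> Le n (R n k)"
  then have l: "l \<in> partitions n" "revlex_le l (R n k)" by (auto simp: Le_def)
  have "part l 0 \<le> 2" using revlex_le_part0[OF l(2)] R_part[OF assms(1), of 0] by (auto split: if_splits)
  then obtain a where a: "2*a \<le> n" "l = R n a" using le2_R l(1) by blast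
  then have "a \<le> k" using l(2) R_cmp assms by auto
  then show "l \<in> R n ` {..k}" using a by auto
next
  fix l assume "l \<in> R n ` {..k}"
  then obtain a where "a \<le> k" "l = R n a" by auto
  then show "l \<in> Le n (R n k)" using assms R_in[of a n] R_cmp[of a n k] by (auto simp: Le_def)
qed

lemma V_R:
  assumes "2*k \<le> n" "0 < n"
  shows "V n (R n k) = (\<Sum>a\<le>k. (-1)^a)"
proof -
  have inj: "inj_on (R n) {..k}"
  proof (rule inj_onI)
    fix a b assume "a \<in> {..k}" "b \<in> {..k}" "R n a = R n b"
    then show "a = b" using R_length[of a n] R_length[of b n] assms by auto
  qed
  have "V n (R n k) = (\<Sum>a\<le>k. eps n (R n a))"
    unfolding V_def Le_R[OF assms] by (rule sum.reindex[OF inj, unfolded comp_def])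
  also have "\<dots> = (\<Sum>a\<le>k. (-1)^a)"
    by (rule sum.cong) (use assms in \<open>auto simp: eps_def R_length\<close>)
  finally show ?thesis .
qed

lemma part5:
  assumes "1 \<le> k" "k \<le> n div 2"
  shows "V n (replicate k 2 @ replicate (n - 2*k) 1)
      = (-1) ^ k + V n (replicate (k-1) 2 @ replicate (n - 2*k + 2) 1)"
proof -
  have k: "2*k \<le> n" "0 < n" using assms by auto
  have k1: "2*(k-1) \<le> n" using k by auto
  have "replicate (k-1) 2 @ replicate (n - 2*k + 2) 1 = R n (k-1)"
  proof -
    have "n - 2*k + 2 = n - 2*(k-1)" using assms k by (simp add: diff_mult_distrib2)
    then show ?thesis unfolding R_def by simp
  qed
  moreover have "replicate k 2 @ replicate (n - 2*k) 1 = R n k" by (simp add: R_def)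
  moreover have "k = Suc (k-1)" using assms by simp
  ultimately show ?thesis using V_R[OF k] V_R[OF k1 k(2)]
    by (metis add.commute sum.atMost_Suc)
qed

lemma Lt3: "0 < n \<Longrightarrow> Lt n 3 = R n ` {..n div 2}"
proof (rule set_eqI, rule iffI)
  fix l assume "l \<in> Lt n 3"
  then have "l \<in> partitions n" "part l 0 \<le> 2" by (auto simp: Lt_def)
  then obtain a where "2*a \<le> n" "l = R n a" using le2_R by blast
  then show "l \<in> R n ` {..n div 2}" by auto
next
  fix l assume "0 < n" "l \<in> R n ` {..n div 2}"
  then obtain a where a: "a \<le> n div 2" "l = R n a" by auto
  then have "2*a \<le> n" by auto
  then show "l \<in> Lt n 3" using a R_in R_part[of a n 0] by (auto simp: Lt_def)
qed

lemma part6: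
  assumes "4 \<le> n"
  shows "V n (3 # replicate (n-3) 1) = 1 + V n (replicate (n div 2) 2 @ replicate (n - 2*(n div 2)) 1)"
proof -
  let ?r = "replicate (n-3) (1::nat)"
  have S: "{r\<in>partitions (n-3). (\<forall>x\<in>set r. x \<le> 3) \<and> revlex_le r ?r} = {?r}"
  proof (rule set_eqI, rule iffI)
    fix r assume "r \<in> {r\<in>partitions (n-3). (\<forall>x\<in>set r. x \<le> 3) \<and> revlex_le r ?r}"
    then have r: "r \<in> partitions (n-3)" "revlex_le r ?r" by auto
    have "part ?r 0 = 1" using assms by (simp add: Defs.part_def)
    then have "part r 0 \<le> 1" using revlex_le_part0[OF r(2)] by simp
    have ip: "is_partition r" and sr: "sum_list r = n - 3" using r(1) by (auto simp: partitions_def)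
    have "\<forall>x\<in>set r. x = 1"
    proof
      fix x assume x: "x \<in> set r"
      then have "x \<le> part r 0" by (rule set_le_part0[OF ip])
      moreover have "0 < x" using ip x by (auto simp: is_partition_def)
      ultimately show "x = 1" using \<open>part r 0 \<le> 1\<close> by simp
    qed
    then have rr: "r = replicate (length r) 1" by (simp add: replicate_length_same)
    moreover have "length r = n - 3"
    proof -
      have "sum_list r = length r" by (subst rr) (simp add: sum_list_replicate)
      then show ?thesis using sr by simp
    qed
    ultimately show "r \<in> {?r}" by simp
  next
    fix r assume "r \<in> {?r}"
    then show "r \<in> {r\<in>partitions (n-3). (\<forall>x\<in>set r. x \<le> 3) \<and> revlex_le r ?r}"
      by (auto simp: partitions_def is_partition_def sum_list_replicate revlex_le_def sorted_rep)
  qed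
  have Le: "Le n (3 # ?r) = Lt n 3 \<union> {3 # ?r}"
    using Le_Cons[of 3 n ?r] assms S by simp
  have notin: "3 # ?r \<notin> Lt n 3" by (simp add: Lt_def)
  have "V n (3 # ?r) = (\<Sum>l\<in>Lt n 3. eps n l) + eps n (3 # ?r)"
    unfolding V_def Le using notin by simp
  also have "eps n (3 # ?r) = 1"
  proof -
    have "n - length (3 # ?r) = 2" using assms by simp
    then show ?thesis unfolding eps_def by simp
  qed
  also have "(\<Sum>l\<in>Lt n 3. eps n l) = V n (R n (n div 2))"
    unfolding V_def using Le_R[of "n div 2" n] Lt3[of n] assms by simp
  finally show ?thesis by (simp add: R_def)
qed


definition selfc :: "(nat \<Rightarrow> nat) \<Rightarrow> bool" where
  "selfc f \<longleftrightarrow> (\<forall>i j. i < f j \<longleftrightarrow> j < f i)"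

lemma downclosed_eq:
  fixes S :: "nat set"
  assumes "finite S" "\<And>j j'. j \<in> S \<Longrightarrow> j' \<le> j \<Longrightarrow> j' \<in> S"
  shows "S = {..<card S}"
proof (cases "S = {}")
  case True then show ?thesis by simp
next
  case False
  define m where "m = Max S"
  have "m \<in> S" using False assms(1) m_def by simp
  have "S = {..m}"
  proof
    show "S \<subseteq> {..m}" using assms(1) m_def by (simp add: subset_iff)
    show "{..m} \<subseteq> S" using assms(2) \<open>m \<in> S\<close> by (simp add: subset_iff)
  qed
  moreover have "card {..m} = Suc m" by simp
  ultimately show ?thesis by (simp add: lessThan_Suc_atMost)
qed

lemma cnt_eq: "length (filter (\<lambda>x. i < x) l) = card {j. i < part l j}"
proof -
  have "{j. j < length l \<and> i < l ! j} = {j. i < part l j}"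
    by (rule Collect_cong) (simp add: Defs.part_def)
  then show ?thesis by (simp add: length_filter_conv_card)
qed

lemma foldr_max_part: "is_partition l \<Longrightarrow> foldr max l 0 = part l 0"
proof (induct l)
  case Nil then show ?case by simp
next
  case (Cons a l)
  have "part l 0 \<le> a" using Cons.prems by (cases l) auto
  then show ?case using Cons by (simp add: max_def)
qed

lemma finite_supp_part: "is_partition l \<Longrightarrow> finite {j. i < part l j}"
proof -
  assume ip: "is_partition l"
  have "{j. i < part l j} \<subseteq> {..<length l}"
  proof
    fix j assume "j \<in> {j. i < part l j}"
    then have "0 < part l j" by simp
    then show "j \<in> {..<length l}" using part_pos_iff[OF ip] by simp
  qed
  then show ?thesis using finite_subset by blast
qed

lemma part_cnt_down:
  assumes ip: "is_partition l"
  shows "{j. i < part l j} = {..<card {j. i < part l j}}"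
proof (rule downclosed_eq[OF finite_supp_part[OF ip]])
  fix j j' assume "j \<in> {j. i < part l j}" "j' \<le> j"
  then show "j' \<in> {j. i < part l j}" using part_mono[OF ip, of j' j] by simp
qed

lemma conj_iff_selfc:
  assumes ip: "is_partition l"
  shows "conj_part l = l \<longleftrightarrow> selfc (part l)"
proof
  assume c: "conj_part l = l"
  have len: "part l 0 = length l"
    using arg_cong[OF c, of length] by (simp add: conj_part_def foldr_max_part[OF ip])
  have pc: "part l i = card {j. i < part l j}" for i
  proof (cases "i < length l")
    case True
    have "l ! i = conj_part l ! i" using c by simp
    also have "\<dots> = card {j. i < part l j}"
      using True len by (simp add: conj_part_def foldr_max_part[OF ip] cnt_eq)
    finally show ?thesis using True by (simp add: Defs.part_def)
  next
    case False
    have "\<not> i < part l j" for j using part_le_0[OF ip, of j] len False by simp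
    then have "{j. i < part l j} = {}" by simp
    then show ?thesis using False by (simp add: Defs.part_def)
  qed
  show "selfc (part l)"
    unfolding selfc_def
  proof (intro allI)
    fix i j
    have "(i < part l j) \<longleftrightarrow> j \<in> {j. i < part l j}" by simp
    also have "\<dots> \<longleftrightarrow> j \<in> {..<part l i}" using part_cnt_down[OF ip, of i] pc[of i] by simp
    also have "\<dots> \<longleftrightarrow> j < part l i" by simp
    finally show "(i < part l j) = (j < part l i)" .
  qed
next
  assume s: "selfc (part l)"
  have pc: "card {j. i < part l j} = part l i" for i
  proof -
    have "{j. i < part l j} = {..<part l i}" using s unfolding selfc_def by auto
    then show ?thesis by simp
  qed
  have len: "part l 0 = length l"
  proof -
    have "{j. 0 < part l j} = {..<length l}" using part_pos_iff[OF ip] by auto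
    then show ?thesis using pc[of 0] by simp
  qed
  show "conj_part l = l"
  proof (rule nth_equalityI)
    show "length (conj_part l) = length l" by (simp add: conj_part_def foldr_max_part[OF ip] len)
  next
    fix i assume "i < length (conj_part l)"
    then have i: "i < length l" by (simp add: conj_part_def foldr_max_part[OF ip] len)
    then show "conj_part l ! i = l ! i"
      by (simp add: conj_part_def foldr_max_part[OF ip] len cnt_eq pc) (simp add: Defs.part_def)
  qed
qed


definition mk :: "(nat \<Rightarrow> nat) \<Rightarrow> nat list" where
  "mk f = map f [0..<card {i. 0 < f i}]"

definition anti :: "(nat \<Rightarrow> nat) \<Rightarrow> bool" where
  "anti f \<longleftrightarrow> (\<forall>i j. i \<le> j \<longrightarrow> f j \<le> f i)"

lemma mk_props:
  assumes a: "anti f" and fin: "finite {i. 0 < f i}"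
  shows "is_partition (mk f)" "part (mk f) = f" "length (mk f) = card {i. 0 < f i}"
proof -
  define L where "L = card {i. 0 < f i}"
  have down: "{i. 0 < f i} = {..<L}"
    unfolding L_def
  proof (rule downclosed_eq[OF fin])
    fix j j' assume "j \<in> {i. 0 < f i}" "j' \<le> j"
    then show "j' \<in> {i. 0 < f i}" using a unfolding anti_def
      by (metis mem_Collect_eq order_less_le_trans)
  qed
  have pos: "0 < f i \<longleftrightarrow> i < L" for i
  proof -
    have "0 < f i \<longleftrightarrow> i \<in> {i. 0 < f i}" by simp
    also have "\<dots> \<longleftrightarrow> i < L" unfolding down by simp
    finally show ?thesis .
  qed
  show "length (mk f) = card {i. 0 < f i}" by (simp add: mk_def)
  show "part (mk f) = f"
  proof
    fix i
    show "part (mk f) i = f i"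
    proof (cases "i < L")
      case True then show ?thesis by (simp add: Defs.part_def mk_def L_def[symmetric])
    next
      case False
      then have "f i = 0" using pos[of i] by simp
      then show ?thesis using False by (simp add: Defs.part_def mk_def L_def[symmetric])
    qed
  qed
  show "is_partition (mk f)"
    unfolding is_partition_def
  proof
    show "sorted_wrt (\<ge>) (mk f)"
      unfolding sorted_wrt_iff_nth_less
      using a by (simp add: mk_def anti_def)
    show "\<forall>x\<in>set (mk f). 0 < x"
    proof
      fix x assume "x \<in> set (mk f)"
      then obtain i where "i < L" "x = f i" by (auto simp: mk_def L_def)
      then show "0 < x" using pos by simp
    qed
  qed
qed

lemma anti_part: "is_partition l \<Longrightarrow> anti (part l)"
  unfolding anti_def using part_mono by blast


definition SCs :: "nat \<Rightarrow> nat \<Rightarrow> nat list set" where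
  "SCs n M = {l\<in>partitions n. selfc (part l) \<and> part l 0 \<le> M}"

definition pl :: "nat list \<Rightarrow> nat \<Rightarrow> nat" where
  "pl l = (\<lambda>i. part l (Suc i) - 1)"
definition peel :: "nat list \<Rightarrow> nat list" where
  "peel l = mk (pl l)"
definition hk :: "nat \<Rightarrow> nat list \<Rightarrow> nat \<Rightarrow> nat" where
  "hk K q = case_nat (Suc K) (\<lambda>i. if i < K then Suc (part q i) else 0)"
definition unpeel :: "nat \<Rightarrow> nat list \<Rightarrow> nat list" where
  "unpeel K q = mk (hk K q)"

lemma selfc_length:
  assumes ip: "is_partition l" and s: "selfc (part l)"
  shows "length l = part l 0"
proof -
  have "j < part l 0 \<longleftrightarrow> j < length l" for j
    using s[unfolded selfc_def, rule_format, of j 0] part_pos_iff[OF ip, of j] by simp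
  then have a: "\<not> part l 0 < length l" and b: "\<not> length l < part l 0"
    by (metis less_irrefl)+
  from a b show ?thesis by simp
qed

lemma peel_props:
  assumes l: "l \<in> partitions n" and s: "selfc (part l)" and top: "part l 0 = Suc K"
  shows "is_partition (peel l)" "part (peel l) = pl l" "selfc (pl l)" "pl l 0 \<le> K"
    "2*K + 1 \<le> n" "sum_list (peel l) = n - (2*K+1)"
proof -
  have ip: "is_partition l" and sl: "sum_list l = n" using l by (auto simp: partitions_def)
  have len: "length l = Suc K" using selfc_length[OF ip s] top by simp
  have anti: "anti (pl l)" unfolding anti_def pl_def
    using part_mono[OF ip] by (simp add: diff_le_mono)
  have supp: "{i. 0 < pl l i} \<subseteq> {..<K}"
  proof
    fix i assume "i \<in> {i. 0 < pl l i}"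
    then have "0 < part l (Suc i)" by (simp add: pl_def)
    then have "Suc i < length l" using part_pos_iff[OF ip, of "Suc i"] by simp
    then show "i \<in> {..<K}" using len by simp
  qed
  have fin: "finite {i. 0 < pl l i}" using supp finite_subset by blast
  show ipp: "is_partition (peel l)" and pp: "part (peel l) = pl l"
    using mk_props[OF anti fin] by (simp_all add: peel_def)
  show "selfc (pl l)" unfolding selfc_def pl_def
  proof (intro allI)
    fix i j
    have "(i < part l (Suc j) - 1) \<longleftrightarrow> Suc i < part l (Suc j)" by arith
    also have "\<dots> \<longleftrightarrow> Suc j < part l (Suc i)" using s[unfolded selfc_def, rule_format, of "Suc i" "Suc j"] .
    also have "\<dots> \<longleftrightarrow> j < part l (Suc i) - 1" by arith
    finally show "(i < part l (Suc j) - 1) = (j < part l (Suc i) - 1)" .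
  qed
  show "pl l 0 \<le> K" unfolding pl_def using part_le_0[OF ip, of 1] top by simp
  have lenp: "length (peel l) \<le> K"
  proof -
    have "length (peel l) = card {i. 0 < pl l i}" using mk_props[OF anti fin] by (simp add: peel_def)
    also have "\<dots> \<le> card {..<K}" by (rule card_mono[OF _ supp]) simp
    finally show ?thesis by simp
  qed
  have "n = (\<Sum>i<Suc K. part l i)" using sum_list_part[of l "Suc K"] len sl by simp
  also have "\<dots> = Suc K + (\<Sum>i<K. part l (Suc i))" unfolding sum.lessThan_Suc_shift top by simp
  also have "(\<Sum>i<K. part l (Suc i)) = (\<Sum>i<K. Suc (pl l i))"
  proof (rule sum.cong)
    fix i assume "i \<in> {..<K}"
    then have "Suc i < length l" using len by simp
    then have "0 < part l (Suc i)" using part_pos_iff[OF ip, of "Suc i"] by simp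
    then show "part l (Suc i) = Suc (pl l i)" by (simp add: pl_def)
  qed simp
  also have "\<dots> = K + (\<Sum>i<K. pl l i)" by (induct K) simp_all
  also have "(\<Sum>i<K. pl l i) = sum_list (peel l)"
    using sum_list_part[OF lenp] pp by simp
  finally have "n = 2*K + 1 + sum_list (peel l)" by simp
  then show "2*K + 1 \<le> n" "sum_list (peel l) = n - (2*K+1)" by simp_all
qed


lemma hk_0[simp]: "hk K q 0 = Suc K" by (simp add: hk_def)
lemma hk_Suc[simp]: "hk K q (Suc i) = (if i < K then Suc (part q i) else 0)" by (simp add: hk_def)

lemma unpeel_props:
  assumes q: "q \<in> partitions m" and s: "selfc (part q)" and top: "part q 0 \<le> K"
  shows "is_partition (unpeel K q)" "part (unpeel K q) = hk K q" "selfc (hk K q)"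
    "sum_list (unpeel K q) = m + (2*K+1)" "length q \<le> K"
proof -
  have ip: "is_partition q" and sq: "sum_list q = m" using q by (auto simp: partitions_def)
  show lq: "length q \<le> K" using selfc_length[OF ip s] top by simp
  have anti: "anti (hk K q)" unfolding anti_def
  proof (intro allI impI)
    fix i j :: nat assume ij: "i \<le> j"
    show "hk K q j \<le> hk K q i"
    proof (cases j)
      case 0 then show ?thesis using ij by simp
    next
      case (Suc b)
      show ?thesis
      proof (cases i)
        case 0
        have "part q b \<le> K" using part_le_0[OF ip, of b] top by simp
        then show ?thesis using Suc 0 by simp
      next
        case (Suc a)
        then have "a \<le> b" using ij \<open>j = Suc b\<close> by simp
        then show ?thesis using Suc \<open>j = Suc b\<close> part_mono[OF ip, of a b] by simp
      qed
    qed
  qed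
  have supp: "{i. 0 < hk K q i} \<subseteq> {..<Suc K}"
  proof
    fix i assume "i \<in> {i. 0 < hk K q i}"
    then show "i \<in> {..<Suc K}" by (cases i) (auto split: if_splits)
  qed
  have fin: "finite {i. 0 < hk K q i}" using supp finite_subset by blast
  show ipu: "is_partition (unpeel K q)" and pu: "part (unpeel K q) = hk K q"
    using mk_props[OF anti fin] by (simp_all add: unpeel_def)
  have lenu: "length (unpeel K q) \<le> Suc K"
  proof -
    have "length (unpeel K q) = card {i. 0 < hk K q i}" using mk_props[OF anti fin] by (simp add: unpeel_def)
    also have "\<dots> \<le> card {..<Suc K}" by (rule card_mono[OF _ supp]) simp
    finally show ?thesis by simp
  qed
  show "selfc (hk K q)" unfolding selfc_def
  proof (intro allI)
    fix i j
    show "(i < hk K q j) = (j < hk K q i)"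
    proof (cases i)
      case 0
      then show ?thesis by (cases j) auto
    next
      case (Suc a)
      show ?thesis
      proof (cases j)
        case 0 then show ?thesis using Suc by auto
      next
        case (Suc b)
        have sab: "a < part q b \<longleftrightarrow> b < part q a" using s[unfolded selfc_def, rule_format, of a b] .
        have "a < part q b \<Longrightarrow> a < K" using part_le_0[OF ip, of b] top by simp
        moreover have "b < part q a \<Longrightarrow> b < K" using part_le_0[OF ip, of a] top by simp
        ultimately show ?thesis using sab Suc \<open>i = Suc a\<close> by auto
      qed
    qed
  qed
  have "sum_list (unpeel K q) = (\<Sum>i<Suc K. hk K q i)" using sum_list_part[OF lenu] pu by simp
  also have "\<dots> = Suc K + (\<Sum>i<K. Suc (part q i))" unfolding sum.lessThan_Suc_shift by simp
  also have "(\<Sum>i<K. Suc (part q i)) = K + (\<Sum>i<K. part q i)" by (induct K) simp_all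
  also have "(\<Sum>i<K. part q i) = m" using sum_list_part[OF lq] sq by simp
  finally show "sum_list (unpeel K q) = m + (2*K+1)" by simp
qed

lemma peel_unpeel:
  assumes q: "q \<in> partitions m" and s: "selfc (part q)" and top: "part q 0 \<le> K"
  shows "peel (unpeel K q) = q" "unpeel K q \<in> partitions (m + (2*K+1))"
proof -
  note u = unpeel_props[OF assms]
  show uin: "unpeel K q \<in> partitions (m + (2*K+1))" using u by (simp add: partitions_def)
  have s': "selfc (part (unpeel K q))" using u by simp
  have t': "part (unpeel K q) 0 = Suc K" using u by simp
  note pp = peel_props[OF uin s' t']
  have ip: "is_partition q" using q by (simp add: partitions_def)
  show "peel (unpeel K q) = q"
  proof (rule part_eq_imp_eq[OF pp(1) ip])
    show "part (peel (unpeel K q)) = part q"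
    proof
      fix i
      show "part (peel (unpeel K q)) i = part q i"
      proof (cases "i < K")
        case True then show ?thesis using pp(2) u(2) by (simp add: pl_def)
      next
        case False
        then have "part q i = 0" using u(5) by (simp add: Defs.part_def)
        then show ?thesis using pp(2) u(2) False by (simp add: pl_def)
      qed
    qed
  qed
qed

lemma unpeel_peel:
  assumes l: "l \<in> partitions n" and s: "selfc (part l)" and top: "part l 0 = Suc K"
  shows "unpeel K (peel l) = l"
proof -
  note pp = peel_props[OF assms]
  have ip: "is_partition l" using l by (simp add: partitions_def)
  have len: "length l = Suc K" using selfc_length[OF ip s] top by simp
  have pin: "peel l \<in> partitions (n - (2*K+1))" using pp by (simp add: partitions_def)
  have sp: "selfc (part (peel l))" using pp by simp
  have tp: "part (peel l) 0 \<le> K" using pp by simp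
  note u = unpeel_props[OF pin sp tp]
  show ?thesis
  proof (rule part_eq_imp_eq[OF u(1) ip])
    show "part (unpeel K (peel l)) = part l"
    proof
      fix i
      show "part (unpeel K (peel l)) i = part l i"
      proof (cases i)
        case 0 then show ?thesis using u(2) top by simp
      next
        case (Suc a)
        show ?thesis
        proof (cases "a < K")
          case True
          then have "0 < part l (Suc a)" using part_pos_iff[OF ip, of "Suc a"] len by simp
          then show ?thesis using u(2) pp(2) Suc True by (simp add: pl_def)
        next
          case False
          then have "part l (Suc a) = 0" using len by (simp add: Defs.part_def)
          then show ?thesis using u(2) Suc False by simp
        qed
      qed
    qed
  qed
qed


lemma finite_SCs[simp]: "finite (SCs n K)"
  unfolding SCs_def using finite_partitions by simp

lemma card_top:
  "card {l\<in>partitions n. selfc (part l) \<and> part l 0 = Suc K}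
    = (if 2*K+1 \<le> n then card (SCs (n - (2*K+1)) K) else 0)"
proof (cases "2*K+1 \<le> n")
  case True
  let ?T = "{l\<in>partitions n. selfc (part l) \<and> part l 0 = Suc K}"
  have "bij_betw peel ?T (SCs (n - (2*K+1)) K)"
  proof (rule bij_betw_byWitness[where f' = "unpeel K"])
    show "\<forall>a\<in>?T. unpeel K (peel a) = a" using unpeel_peel by blast
    show "\<forall>a\<in>SCs (n - (2*K+1)) K. peel (unpeel K a) = a"
      unfolding SCs_def using peel_unpeel(1) by blast
    show "peel ` ?T \<subseteq> SCs (n - (2*K+1)) K"
    proof
      fix x assume "x \<in> peel ` ?T"
      then obtain l where l: "l \<in> ?T" "x = peel l" by blast
      note pp = peel_props[of l n K]
      show "x \<in> SCs (n - (2*K+1)) K" using l pp unfolding SCs_def partitions_def by auto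
    qed
    show "unpeel K ` SCs (n - (2*K+1)) K \<subseteq> ?T"
    proof
      fix x assume "x \<in> unpeel K ` SCs (n - (2*K+1)) K"
      then obtain q where q: "q \<in> SCs (n - (2*K+1)) K" "x = unpeel K q" by blast
      have q1: "q \<in> partitions (n - (2*K+1))" "selfc (part q)" "part q 0 \<le> K"
        using q(1) unfolding SCs_def by auto
      note u = unpeel_props[OF q1]
      have "x \<in> partitions n" using peel_unpeel(2)[OF q1] q(2) True by simp
      then show "x \<in> ?T" using u q(2) by simp
    qed
  qed
  then show ?thesis using True bij_betw_same_card by auto
next
  case False
  have E: "{l\<in>partitions n. selfc (part l) \<and> part l 0 = Suc K} = {}"
    using peel_props(5) False by blast
  show ?thesis using False by (subst E) simp
qed

lemma card_SCs_Suc: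
  "card (SCs n (Suc K)) = card (SCs n K) + (if 2*K+1 \<le> n then card (SCs (n - (2*K+1)) K) else 0)"
proof -
  have e: "SCs n (Suc K) = SCs n K \<union> {l\<in>partitions n. selfc (part l) \<and> part l 0 = Suc K}"
    unfolding SCs_def by auto
  have "card (SCs n (Suc K)) = card (SCs n K) + card {l\<in>partitions n. selfc (part l) \<and> part l 0 = Suc K}"
    unfolding e by (rule card_Un_disjoint) (use finite_partitions in \<open>auto simp: SCs_def\<close>)
  then show ?thesis using card_top by simp
qed

lemma SCs_0_sub: "l \<in> SCs n 0 \<Longrightarrow> l = []"
proof -
  assume "l \<in> SCs n 0"
  then have "is_partition l" "part l 0 = 0" by (auto simp: SCs_def partitions_def)
  then have "\<not> 0 < length l" using part_pos_iff[of l 0] by simp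
  then show "l = []" by simp
qed

lemma SCs_0: "SCs n 0 = (if n = 0 then {[]} else {})"
proof -
  have "l \<in> SCs n 0 \<longleftrightarrow> l = [] \<and> n = 0" for l
  proof
    assume l: "l \<in> SCs n 0"
    then have e: "l = []" by (rule SCs_0_sub)
    with l have "n = 0" by (simp add: SCs_def)
    with e show "l = [] \<and> n = 0" by simp
  next
    assume "l = [] \<and> n = 0" then show "l \<in> SCs n 0" by (simp add: SCs_def selfc_def)
  qed
  then show ?thesis by auto
qed

definition PB :: "nat \<Rightarrow> nat \<Rightarrow> nat list set" where
  "PB n N = {l\<in>partitions n. \<forall>x\<in>set l. x \<le> N}"
definition S :: "nat \<Rightarrow> nat \<Rightarrow> rat" where
  "S n N = (\<Sum>l\<in>PB n N. eps n l)"

lemma finite_PB[simp]: "finite (PB n N)"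
  unfolding PB_def using finite_partitions by simp

lemma PB_0_sub: "l \<in> PB n 0 \<Longrightarrow> l = []"
proof (cases l)
  case (Cons a r)
  assume l: "l \<in> PB n 0"
  then have "is_partition l" "\<forall>x\<in>set l. x \<le> 0" by (auto simp: PB_def partitions_def)
  then show ?thesis using Cons by simp
qed simp

lemma PB_0: "PB n 0 = (if n = 0 then {[]} else {})"
proof -
  have "l \<in> PB n 0 \<longleftrightarrow> l = [] \<and> n = 0" for l
  proof
    assume l: "l \<in> PB n 0"
    then have e: "l = []" by (rule PB_0_sub)
    with l have "n = 0" by (simp add: PB_def)
    with e show "l = [] \<and> n = 0" by simp
  next
    assume "l = [] \<and> n = 0" then show "l \<in> PB n 0" by (simp add: PB_def)
  qed
  then show ?thesis by auto
qed

lemma S_0: "S n 0 = (if n = 0 then 1 else 0)"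
  by (simp add: S_def PB_0 eps_def)

lemma S_Suc:
  "S n (Suc N) = S n N + (if Suc N \<le> n then (-1)^N * S (n - Suc N) (Suc N) else 0)"
proof -
  let ?T = "{l\<in>partitions n. (\<forall>x\<in>set l. x \<le> Suc N) \<and> part l 0 = Suc N}"
  have e: "PB n (Suc N) = PB n N \<union> ?T"
  proof (rule set_eqI, rule iffI)
    fix l assume l: "l \<in> PB n (Suc N)"
    show "l \<in> PB n N \<union> ?T"
    proof (cases "part l 0 = Suc N")
      case True then show ?thesis using l by (simp add: PB_def)
    next
      case False
      have ip: "is_partition l" using l by (simp add: PB_def partitions_def)
      have "\<forall>x\<in>set l. x \<le> N"
      proof
        fix x assume x: "x \<in> set l"
        have "x \<le> part l 0" using set_le_part0[OF ip x] .
        moreover have "part l 0 \<le> Suc N" using l x by (cases l) (auto simp: PB_def)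
        moreover have "x \<le> Suc N" using l x by (auto simp: PB_def)
        ultimately show "x \<le> N" using False by linarith
      qed
      then show ?thesis using l by (simp add: PB_def)
    qed
  next
    fix l assume "l \<in> PB n N \<union> ?T"
    then show "l \<in> PB n (Suc N)" by (auto simp: PB_def)
  qed
  have finT: "finite ?T" using finite_partitions by simp
  have d: "PB n N \<inter> ?T = {}"
  proof -
    have a: "l \<in> PB n N \<Longrightarrow> part l 0 \<le> N" for l by (cases l) (auto simp: PB_def)
    have "l \<notin> PB n N \<inter> ?T" for l
    proof
      assume "l \<in> PB n N \<inter> ?T"
      then have "part l 0 \<le> N" "part l 0 = Suc N" using a[of l] by auto
      then show False by simp
    qed
    then show ?thesis by blast
  qed
  have ST: "(\<Sum>l\<in>?T. eps n l) = (if Suc N \<le> n then (-1)^N * S (n - Suc N) (Suc N) else 0)"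
  proof (cases "Suc N \<le> n")
    case True
    have T: "?T = Cons (Suc N) ` PB (n - Suc N) (Suc N)"
    proof (rule set_eqI, rule iffI)
      fix l assume l: "l \<in> ?T"
      then obtain r where "l = Suc N # r" by (cases l) auto
      then show "l \<in> Cons (Suc N) ` PB (n - Suc N) (Suc N)" using l by (auto simp: PB_def)
    next
      fix l assume "l \<in> Cons (Suc N) ` PB (n - Suc N) (Suc N)"
      then show "l \<in> ?T" using True by (auto simp: PB_def)
    qed
    have "(\<Sum>l\<in>?T. eps n l) = (\<Sum>r\<in>PB (n - Suc N) (Suc N). eps n (Suc N # r))"
      unfolding T by (rule sum.reindex[unfolded comp_def]) simp
    also have "\<dots> = (\<Sum>r\<in>PB (n - Suc N) (Suc N). (-1)^N * eps (n - Suc N) r)"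
    proof (rule sum.cong)
      fix r assume "r \<in> PB (n - Suc N) (Suc N)"
      then have "is_partition r" "sum_list r = n - Suc N" by (auto simp: PB_def partitions_def)
      then have "length r \<le> n - Suc N" using length_le_sum[of r] by simp
      then have "n - length (Suc N # r) = N + (n - Suc N - length r)" using True by simp
      then show "eps n (Suc N # r) = (-1)^N * eps (n - Suc N) r"
        unfolding eps_def by (simp add: power_add)
    qed simp
    also have "\<dots> = (-1)^N * S (n - Suc N) (Suc N)" by (simp add: S_def sum_distrib_left)
    finally show ?thesis using True by simp
  next
    case False
    have E: "?T = {}"
    proof -
      have a: "l \<in> ?T \<Longrightarrow> part l 0 \<le> n" for l
        by (cases l) auto
      have "l \<notin> ?T" for l
      proof
        assume "l \<in> ?T"
        then have "part l 0 \<le> n" "part l 0 = Suc N" using a[of l] by blast+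
        then show False using False by simp
      qed
      then show ?thesis by blast
    qed
    show ?thesis using False by (subst E) simp
  qed
  have U: "(\<Sum>l\<in>PB n (Suc N). eps n l) = (\<Sum>l\<in>PB n N. eps n l) + (\<Sum>l\<in>?T. eps n l)"
    unfolding e by (rule sum.union_disjoint) (simp_all add: d finT)
  have X: "S n (Suc N) = S n N + (\<Sum>l\<in>?T. eps n l)"
    by (simp only: S_def[of n "Suc N"] S_def[of n N] U)
  show ?thesis unfolding X ST ..
qed


definition Af :: "nat \<Rightarrow> rat fps" where "Af N = Abs_fps (\<lambda>n. S n N)"
definition Cf :: "nat \<Rightarrow> rat fps" where "Cf K = Abs_fps (\<lambda>n. of_nat (card (SCs n K)))"

lemma Cf_0: "Cf 0 = 1"
  by (rule fps_ext) (simp add: Cf_def SCs_0)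

lemma Cf_Suc: "Cf (Suc K) = Cf K * (1 + fps_X ^ (2*K+1))"
proof (rule fps_ext)
  fix n
  have "fps_nth (Cf K * (1 + fps_X ^ (2*K+1))) n = fps_nth (Cf K) n + fps_nth (Cf K * fps_X ^ (2*K+1)) n"
    by (simp add: distrib_left)
  also have "\<dots> = fps_nth (Cf (Suc K)) n"
    unfolding fps_X_power_mult_right_nth by (simp add: Cf_def card_SCs_Suc not_less)
  finally show "fps_nth (Cf (Suc K)) n = fps_nth (Cf K * (1 + fps_X ^ (2*K+1))) n" by simp
qed

lemma Cf_prod: "Cf K = (\<Prod>k<K. 1 + fps_X ^ (2*k+1))"
  by (induct K) (simp_all add: Cf_0 Cf_Suc)

lemma Af_0: "Af 0 = 1"
  by (rule fps_ext) (simp add: Af_def S_0)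

lemma Af_Suc: "Af (Suc N) * (1 - fps_const ((-1)^N) * fps_X ^ (Suc N)) = Af N"
proof (rule fps_ext)
  fix n
  have e: "Af (Suc N) * (1 - fps_const ((-1)^N) * fps_X ^ (Suc N))
      = Af (Suc N) - fps_const ((-1)^N) * (Af (Suc N) * fps_X ^ (Suc N))"
    by (simp add: algebra_simps)
  show "fps_nth (Af (Suc N) * (1 - fps_const ((-1)^N) * fps_X ^ (Suc N))) n = fps_nth (Af N) n"
    unfolding e fps_sub_nth fps_mult_left_const_nth fps_X_power_mult_right_nth
    by (simp add: Af_def S_Suc not_less)
qed

definition P1 :: "nat \<Rightarrow> rat fps" where
  "P1 N = (\<Prod>k<N. 1 - fps_const ((-1)^k) * fps_X ^ (Suc k))"
definition P2 :: "nat \<Rightarrow> rat fps" where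
  "P2 N = (\<Prod>k<N. 1 + fps_const ((-1)^k) * fps_X ^ (Suc k))"
definition Ef :: "nat \<Rightarrow> rat fps" where
  "Ef M = (\<Prod>k<M. 1 - fps_X ^ (2 * Suc k))"
definition Qf :: "nat \<Rightarrow> rat fps" where
  "Qf M = (\<Prod>k<M. 1 - fps_X ^ (2 * Suc (M + k)))"

lemma Af_P1: "Af N * P1 N = 1"
proof (induct N)
  case 0 then show ?case by (simp add: Af_0 P1_def)
next
  case (Suc N)
  have "Af (Suc N) * P1 (Suc N)
     = (Af (Suc N) * (1 - fps_const ((-1)^N) * fps_X ^ (Suc N))) * P1 N"
    by (simp add: P1_def mult_ac)
  also have "\<dots> = 1" using Suc by (simp only: Af_Suc)
  finally show ?case .
qed

lemma factor_sq:
  fixes c :: rat and Y :: "rat fps"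
  assumes "c * c = 1"
  shows "(1 - fps_const c * Y) * (1 + fps_const c * Y) = 1 - Y * Y"
proof -
  have "(1 - fps_const c * Y) * (1 + fps_const c * Y) = 1 - (fps_const c * fps_const c) * (Y * Y)"
    by (simp add: algebra_simps)
  also have "fps_const c * fps_const c = 1" using assms by (simp add: fps_const_mult[symmetric])
  finally show ?thesis by simp
qed

lemma P1_P2: "P1 N * P2 N = (\<Prod>k<N. 1 - fps_X ^ (2 * Suc k))"
  unfolding P1_def P2_def prod.distrib[symmetric]
proof (rule prod.cong)
  fix k assume "k \<in> {..<N}"
  have "((-1::rat)^k) * ((-1)^k) = 1" by (simp add: power_add[symmetric])
  then have "(1 - fps_const ((-1::rat)^k) * fps_X ^ (Suc k)) * (1 + fps_const ((-1)^k) * fps_X ^ (Suc k))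
      = 1 - fps_X ^ (Suc k) * fps_X ^ (Suc k)" by (rule factor_sq)
  also have "fps_X ^ (Suc k) * fps_X ^ (Suc k) = (fps_X ^ (2 * Suc k) :: rat fps)"
    by (simp add: power_add[symmetric] mult_2)
  finally show "(1 - fps_const ((-1::rat)^k) * fps_X ^ (Suc k)) * (1 + fps_const ((-1)^k) * fps_X ^ (Suc k))
      = 1 - fps_X ^ (2 * Suc k)" .
qed simp

lemma P2_even: "P2 (2*M) = Cf M * Ef M"
proof (induct M)
  case 0 then show ?case by (simp add: P2_def Cf_0 Ef_def)
next
  case (Suc M)
  have e: "2 * Suc M = Suc (Suc (2*M))" by simp
  have "P2 (2 * Suc M) = P2 (2*M) * (1 + fps_const ((-1)^(2*M)) * fps_X ^ (Suc (2*M)))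
       * (1 + fps_const ((-1)^(Suc (2*M))) * fps_X ^ (Suc (Suc (2*M))))"
    unfolding e P2_def by (simp add: mult_ac)
  also have "(-1::rat)^(2*M) = 1" by simp
  also have "(-1::rat)^(Suc (2*M)) = -1" by simp
  also have "P2 (2*M) * (1 + fps_const 1 * fps_X ^ Suc (2 * M)) * (1 + fps_const (- 1) * fps_X ^ Suc (Suc (2 * M)))
      = (Cf M * (1 + fps_X ^ (2*M+1))) * (Ef M * (1 - fps_X ^ (2 * Suc M)))"
    using Suc by (simp add: mult_ac fps_const_neg[symmetric])
  also have "\<dots> = Cf (Suc M) * Ef (Suc M)"
    by (simp add: Cf_Suc Ef_def)
  finally show ?case .
qed

lemma prod_lessThan_add: "(\<Prod>k<a+b. f k) = (\<Prod>k<a. f k) * (\<Prod>k<b. f (a+k))"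
  for f :: "nat \<Rightarrow> 'a::comm_monoid_mult"
  by (induct b) (simp_all add: mult_ac)

lemma E_split: "(\<Prod>k<2*M. 1 - fps_X ^ (2 * Suc k)) = Ef M * (Qf M :: rat fps)"
proof -
  have "2*M = M + M" by simp
  then show ?thesis unfolding Ef_def Qf_def by (simp only: prod_lessThan_add)
qed

lemma Ef_nz: "Ef M \<noteq> 0"
proof -
  have "fps_nth (Ef M) 0 = 1" unfolding Ef_def by (induct M) simp_all
  then show ?thesis by auto
qed

lemma Cf_Af: "Cf M = Af (2*M) * Qf M"
proof -
  have "Cf M * Ef M = P2 (2*M)" by (simp add: P2_even)
  also have "\<dots> = (Af (2*M) * P1 (2*M)) * P2 (2*M)" by (simp add: Af_P1)
  also have "\<dots> = Af (2*M) * (P1 (2*M) * P2 (2*M))" by (simp add: mult_ac)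
  also have "\<dots> = (Af (2*M) * Qf M) * Ef M" by (simp only: P1_P2 E_split) (simp add: mult_ac)
  finally show ?thesis using Ef_nz by simp
qed

lemma Qf_form: "\<exists>T. Qf M = 1 + fps_X ^ (2 * Suc M) * T"
proof -
  have "\<exists>T. (\<Prod>k<j. 1 - fps_X ^ (2 * Suc (M + k))) = (1::rat fps) + fps_X ^ (2 * Suc M) * T" for j
  proof (induct j)
    case 0 then show ?case by (intro exI[of _ 0]) simp
  next
    case (Suc j)
    then obtain T where T: "(\<Prod>k<j. 1 - fps_X ^ (2 * Suc (M + k))) = (1::rat fps) + fps_X ^ (2 * Suc M) * T"
      by blast
    have f: "1 - fps_X ^ (2 * Suc (M + j)) = (1::rat fps) + fps_X ^ (2 * Suc M) * (- (fps_X ^ (2*j)))"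
      by (simp add: power_add[symmetric])
    show ?case unfolding prod.lessThan_Suc T f
      by (rule exI[of _ "T + (- (fps_X ^ (2*j))) + fps_X ^ (2 * Suc M) * T * (- (fps_X ^ (2*j)))"])
         (simp add: algebra_simps)
  qed
  then show ?thesis unfolding Qf_def by blast
qed

lemma coeff_low:
  fixes F U :: "rat fps"
  assumes "n < m"
  shows "fps_nth (F * (1 + fps_X ^ m * U)) n = fps_nth F n"
proof -
  have "F * (1 + fps_X ^ m * U) = F + fps_X ^ m * (F * U)" by (simp add: algebra_simps)
  then show ?thesis using assms by (simp add: fps_X_power_mult_nth)
qed

lemma main_identity: "of_nat (card (SCs n M)) = S n (2*M)" if "n < 2 * Suc M"
proof -
  obtain T where T: "Qf M = 1 + fps_X ^ (2 * Suc M) * T" using Qf_form by blast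
  have "fps_nth (Cf M) n = fps_nth (Af (2*M)) n" unfolding Cf_Af T using coeff_low[OF that] .
  then show ?thesis by (simp add: Cf_def Af_def)
qed


lemma part0_le: "l \<in> partitions n \<Longrightarrow> part l 0 \<le> n"
  by (cases l) (auto simp: partitions_def)

lemma V_n:
  assumes "0 < n"
  shows "V n [n] = of_nat (card {l\<in>partitions n. conj_part l = l})"
proof -
  have Le: "Le n [n] = partitions n"
    using Le_single[OF assms] Lt_Suc(1)[OF assms, of n] Lt_all[of n] by simp
  have PB: "PB n (2*n) = partitions n"
  proof -
    have "x \<le> 2*n" if "l \<in> partitions n" "x \<in> set l" for l x
      using member_le_sum_list[OF that(2)] that(1) by (simp add: partitions_def)
    then show ?thesis unfolding PB_def by blast
  qed
  have SC: "SCs n n = {l\<in>partitions n. conj_part l = l}"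
  proof -
    have "selfc (part l) \<and> part l 0 \<le> n \<longleftrightarrow> conj_part l = l" if "l \<in> partitions n" for l
      using conj_iff_selfc[of l] part0_le[OF that] that by (simp add: partitions_def)
    then show ?thesis unfolding SCs_def by blast
  qed
  have "V n [n] = S n (2*n)" unfolding V_def S_def Le PB ..
  also have "\<dots> = of_nat (card (SCs n n))" using main_identity[of n n] by simp
  finally show ?thesis unfolding SC .
qed

theorem corollary2p17:
  fixes n :: nat
  assumes "n \<ge> 6"
  shows
    "(hall (psi [n]) (schur_col n) = hall (psi [n-2, 2]) (schur_col n)
      \<and> hall (psi [n]) (schur_col n) = of_nat (card {lam\<in>partitions n. conj_part lam = lam}))
   \<and> hall (psi [n-1, 1]) (schur_col n) = hall (psi [n]) (schur_col n) + (-1) ^ n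
   \<and> hall (psi [n-2, 1, 1]) (schur_col n) = hall (psi [n]) (schur_col n) - (-1) ^ n
   \<and> hall (psi [n-3, 3]) (schur_col n) = hall (psi [n]) (schur_col n)
   \<and> (\<forall>k. 1 \<le> k \<and> k \<le> n div 2 \<longrightarrow>
        hall (psi (replicate k 2 @ replicate (n - 2*k) 1)) (schur_col n)
        = (-1) ^ k + hall (psi (replicate (k-1) 2 @ replicate (n - 2*k + 2) 1)) (schur_col n))
   \<and> hall (psi (3 # replicate (n-3) 1)) (schur_col n)
      = 1 + hall (psi (replicate (n div 2) 2 @ replicate (n - 2*(n div 2)) 1)) (schur_col n)"
proof -
  note p = part1to4[OF assms]
  have h1: "hall (psi [n]) (schur_col n) = V n [n]" by (rule hall_V) simp
  have h2: "hall (psi [n-2,2]) (schur_col n) = V n [n-2,2]" by (rule hall_V) (use assms in simp)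
  have h3: "hall (psi [n-1,1]) (schur_col n) = V n [n-1,1]" by (rule hall_V) (use assms in simp)
  have h4: "hall (psi [n-2,1,1]) (schur_col n) = V n [n-2,1,1]" by (rule hall_V) (use assms in simp)
  have h5: "hall (psi [n-3,3]) (schur_col n) = V n [n-3,3]" by (rule hall_V) (use assms in simp)
  have h6: "hall (psi (3 # replicate (n-3) 1)) (schur_col n) = V n (3 # replicate (n-3) 1)"
    by (rule hall_V) (use assms in \<open>simp add: sum_list_replicate\<close>)
  have h7: "hall (psi (replicate (n div 2) 2 @ replicate (n - 2*(n div 2)) 1)) (schur_col n)
      = V n (replicate (n div 2) 2 @ replicate (n - 2*(n div 2)) 1)"
    by (rule hall_V) (simp add: sum_list_replicate)
  have h8: "\<forall>k. 1 \<le> k \<and> k \<le> n div 2 \<longrightarrow>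
        hall (psi (replicate k 2 @ replicate (n - 2*k) 1)) (schur_col n)
        = (-1) ^ k + hall (psi (replicate (k-1) 2 @ replicate (n - 2*k + 2) 1)) (schur_col n)"
  proof (intro allI impI)
    fix k assume k: "1 \<le> k \<and> k \<le> n div 2"
    have k2: "2*k \<le> n" using k by auto
    have a: "hall (psi (replicate k 2 @ replicate (n - 2*k) 1)) (schur_col n)
        = V n (replicate k 2 @ replicate (n - 2*k) 1)"
      by (rule hall_V) (use k2 in \<open>simp add: sum_list_replicate\<close>)
    have b: "hall (psi (replicate (k-1) 2 @ replicate (n - 2*k + 2) 1)) (schur_col n)
        = V n (replicate (k-1) 2 @ replicate (n - 2*k + 2) 1)"
      by (rule hall_V) (use k k2 in \<open>(simp add: sum_list_replicate; arith)\<close>)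
    show "hall (psi (replicate k 2 @ replicate (n - 2*k) 1)) (schur_col n)
        = (-1) ^ k + hall (psi (replicate (k-1) 2 @ replicate (n - 2*k + 2) 1)) (schur_col n)"
      unfolding a b using part5 k by blast
  qed
  have h9: "V n (3 # replicate (n-3) 1) = 1 + V n (replicate (n div 2) 2 @ replicate (n - 2*(n div 2)) 1)"
    using part6 assms by simp
  show ?thesis
    unfolding h1 h2 h3 h4 h5 h6 h7
    using p h8 h9 V_n[of n] assms by simp
qed


end
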